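(* Let $G=(V,E,w)$, $s$, $\tau$ (with $|\tau|\ge 2$) and a budget $b\ge 0$ be as in the context, and suppose that at least one feasible subgraph exists. Then \[ \max_{\substack{S\subseteq G \text{ feasible}}} \textsc{CD}_{\tau,s}(S) \;=\; \max_{\substack{S\in\mathcal{S}(\tau,s)\\ w(S)\le b}} \textsc{CD}_{\tau,s}(S), \] and in particular there is an optimal solution $S^\star\in\mathcal{S}(\tau,s)$ with $w(S^\star)\le b$.
   Context: Let $G=(V,E,w)$ be a finite directed graph with non-negative edge weights $w:E\to\mathbb{R}_{\ge 0}$. A path from $u$ to $v$ in a subgraph $S\subseteq G$ is a sequence $u=v_0\to v_1\to\cdots\to v_k=v$ ($k\ge 0$) with each $v_i\to v_{i+1}$ an edge of $S$; for $i\le j$, $w_P(v_i,v_j)=\sum_{m=i}^{j-1} w(v_m\to v_{m+1})$. A vertex $y$ is reachable from $x$ in $S$ if there is a path from $x$ to $y$ in $S$ (a vertex is reachable from itself). Fix a start vertex $s\in V$ and a finite target set $\tau\subseteq V\setminus\{s\}$ with $|\tau|\ge 2$. The cost of a subgraph $S$ is $w(S)=\sum_{e\in E(S)} w(e)$. For a subgraph $S$ containing $s$ and $\tau$ in which every target is reachable from $s$: for a path $P=v_0\to\cdots\to v_k$ in $S$ with $v_0=s$, $v_k=t\in\tau$, let $\ell$ be the largest index such that some target in $\tau\setminus\{t\}$ is reachable from $v_\ell$ in $S$; the last deceptive point is $l(P,t)=v_\ell$. The unique distance of $t\in\tau$ is $\textsc{U}_S(t)=\min\{w_P(l(P,t),t):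 P \text{ a path in } S \text{ from } s \text{ to } t\}$, and the counterdeceptiveness of $S$ is $\textsc{CD}_{\tau,s}(S)=\min_{t\in\tau}\textsc{U}_S(t)$. Given a budget $b\ge 0$, a subgraph $S\subseteq G$ is feasible if $s\in V(S)$, $\tau\subseteq V(S)$, every target is reachable from $s$ in $S$, and $w(S)\le b$. $\mathcal{S}(\tau,s)$ denotes the set of Steiner trees in $G$ rooted at $s$ with leaves in $\tau$: subgraphs $S\subseteq G$ that are out-arborescences rooted at $s$ (underlying undirected graph a tree, $s$ of in-degree $0$, every other vertex of in-degree $1$), with $\tau\subseteq V(S)$, and such that every leaf (vertex other than $s$ of out-degree $0$) belongs to $\tau$. *)

theory Defs
  imports Complex_Main
begin

type_synonym 'v sgraph = "'v set \<times> ('v \<times> 'v) set"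

definition verts :: "'v sgraph \<Rightarrow> 'v set" where "verts S = fst S"
definition arcs :: "'v sgraph \<Rightarrow> ('v \<times> 'v) set" where "arcs S = snd S"

definition is_subgraph :: "'v set \<Rightarrow> ('v \<times> 'v) set \<Rightarrow> 'v sgraph \<Rightarrow> bool" where
  "is_subgraph V E S \<longleftrightarrow> verts S \<subseteq> V \<and> arcs S \<subseteq> E \<and> arcs S \<subseteq> verts S \<times> verts S"

definition cost :: "('v \<times> 'v \<Rightarrow> real) \<Rightarrow> 'v sgraph \<Rightarrow> real" where
  "cost w S = (\<Sum>e\<in>arcs S. w e)"

definition is_path :: "'v sgraph \<Rightarrow> 'v list \<Rightarrow> bool" where
  "is_path S xs \<longleftrightarrow> xs \<noteq> [] \<and> set xs \<subseteq> verts S \<and>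
     (\<forall>i. Suc i < length xs \<longrightarrow> (xs ! i, xs ! Suc i) \<in> arcs S)"

definition path_weight :: "('v \<times> 'v \<Rightarrow> real) \<Rightarrow> 'v list \<Rightarrow> nat \<Rightarrow> nat \<Rightarrow> real" where
  "path_weight w xs i j = (\<Sum>m\<in>{i..<j}. w (xs ! m, xs ! Suc m))"

definition reachable :: "'v sgraph \<Rightarrow> 'v \<Rightarrow> 'v \<Rightarrow> bool" where
  "reachable S x y \<longleftrightarrow> (\<exists>xs. is_path S xs \<and> hd xs = x \<and> last xs = y)"

definition ldp_index :: "'v sgraph \<Rightarrow> 'v set \<Rightarrow> 'v \<Rightarrow> 'v list \<Rightarrow> nat" where
  "ldp_index S \<tau> t xs = (GREATEST i. i < length xs \<and> (\<exists>t'\<in>\<tau> - {t}. reachable S (xs ! i) t'))"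

text \<open>Unique distance U_S(t): minimum (infimum, which is attained) over paths P from s to t
  of w_P(l(P,t), t).\<close>
definition unique_dist :: "('v \<times> 'v \<Rightarrow> real) \<Rightarrow> 'v set \<Rightarrow> 'v \<Rightarrow> 'v sgraph \<Rightarrow> 'v \<Rightarrow> real" where
  "unique_dist w \<tau> s S t = Inf {path_weight w xs (ldp_index S \<tau> t xs) (length xs - 1) | xs.
       is_path S xs \<and> hd xs = s \<and> last xs = t}"

definition CD :: "('v \<times> 'v \<Rightarrow> real) \<Rightarrow> 'v set \<Rightarrow> 'v \<Rightarrow> 'v sgraph \<Rightarrow> real" where
  "CD w \<tau> s S = Min (unique_dist w \<tau> s S ` \<tau>)"

definition feasible :: "'v set \<Rightarrow> ('v \<times> 'v) set \<Rightarrow> ('v \<times> 'v \<Rightarrow> real) \<Rightarrow> 'v set \<Rightarrow> 'v \<Rightarrow> real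
    \<Rightarrow> 'v sgraph \<Rightarrow> bool" where
  "feasible V E w \<tau> s b S \<longleftrightarrow> is_subgraph V E S \<and> s \<in> verts S \<and> \<tau> \<subseteq> verts S \<and>
     (\<forall>t\<in>\<tau>. reachable S s t) \<and> cost w S \<le> b"

text \<open>An undirected cycle is a cyclic sequence of k >= 1 distinct vertices joined by k distinct
  arcs of S (each arc used in either direction); k = 1 is a loop, k = 2 a pair of
  antiparallel arcs.\<close>
definition und_connected :: "'v sgraph \<Rightarrow> bool" where
  "und_connected S \<longleftrightarrow> (\<forall>u\<in>verts S. \<forall>v\<in>verts S.
      (u, v) \<in> (arcs S \<union> (arcs S)\<inverse>)\<^sup>*)"

definition und_cycle :: "'v sgraph \<Rightarrow> 'v list \<Rightarrow> ('v \<times> 'v) list \<Rightarrow> bool" where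
  "und_cycle S vs as \<longleftrightarrow> length vs \<ge> 1 \<and> length as = length vs \<and> distinct vs \<and> distinct as \<and>
     set as \<subseteq> arcs S \<and>
     (\<forall>i<length vs. as ! i = (vs ! i, vs ! ((i + 1) mod length vs)) \<or>
                    as ! i = (vs ! ((i + 1) mod length vs), vs ! i))"

definition und_tree :: "'v sgraph \<Rightarrow> bool" where
  "und_tree S \<longleftrightarrow> verts S \<noteq> {} \<and> und_connected S \<and> (\<nexists>vs as. und_cycle S vs as)"

definition out_arborescence :: "'v sgraph \<Rightarrow> 'v \<Rightarrow> bool" where
  "out_arborescence S s \<longleftrightarrow> und_tree S \<and> s \<in> verts S \<and>
     card {u. (u, s) \<in> arcs S} = 0 \<and>
     (\<forall>v\<in>verts S - {s}. card {u. (u, v) \<in> arcs S} = 1)"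

definition steiner_trees :: "'v set \<Rightarrow> ('v \<times> 'v) set \<Rightarrow> 'v set \<Rightarrow> 'v \<Rightarrow> 'v sgraph set" where
  "steiner_trees V E \<tau> s = {S. is_subgraph V E S \<and> out_arborescence S s \<and> \<tau> \<subseteq> verts S \<and>
      (\<forall>v\<in>verts S - {s}. (\<nexists>x. (v, x) \<in> arcs S) \<longrightarrow> v \<in> \<tau>)}"

end

theory Submission
  imports Defs
begin

lemma verts_pair[simp]: "verts (a,b) = a" by (simp add: verts_def)
lemma arcs_pair[simp]: "arcs (a,b) = b" by (simp add: arcs_def)

lemma path_rtrancl:
  assumes "is_path S xs"
  shows "\<forall>i<length xs. (xs!0, xs!i) \<in> (arcs S)\<^sup>*"
proof (intro allI impI)
  fix i assume "i < length xs"
  then show "(xs!0, xs!i) \<in> (arcs S)\<^sup>*"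
  proof (induction i)
    case 0 then show ?case by simp
  next
    case (Suc i)
    then have "(xs!i, xs!Suc i) \<in> arcs S" using assms by (simp add: is_path_def)
    with Suc show ?case by (meson Suc_lessD rtrancl.rtrancl_into_rtrancl)
  qed
qed

lemma reach_iff:
  assumes "arcs S \<subseteq> verts S \<times> verts S"
  shows "reachable S x y \<longleftrightarrow> x \<in> verts S \<and> (x,y) \<in> (arcs S)\<^sup>*"
proof
  assume "reachable S x y"
  then obtain xs where p: "is_path S xs" "hd xs = x" "last xs = y" by (auto simp: reachable_def)
  then have ne: "xs \<noteq> []" by (simp add: is_path_def)
  have "x \<in> verts S" using p ne by (auto simp: is_path_def)
  moreover have "(xs!0, xs!(length xs - 1)) \<in> (arcs S)\<^sup>*" using path_rtrancl[OF p(1)] ne by simp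
  ultimately show "x \<in> verts S \<and> (x,y) \<in> (arcs S)\<^sup>*" using p ne by (simp add: hd_conv_nth last_conv_nth)
next
  assume "x \<in> verts S \<and> (x,y) \<in> (arcs S)\<^sup>*"
  then have xv: "x \<in> verts S" and r: "(x,y) \<in> (arcs S)\<^sup>*" by auto
  from r show "reachable S x y"
  proof (induction rule: rtrancl_induct)
    case base
    have "is_path S [x]" using xv by (simp add: is_path_def)
    then show ?case unfolding reachable_def by force
  next
    case (step y z)
    then obtain xs where p: "is_path S xs" "hd xs = x" "last xs = y" by (auto simp: reachable_def)
    have ne: "xs \<noteq> []" using p by (simp add: is_path_def)
    have zv: "z \<in> verts S" using step assms by auto
    have "is_path S (xs @ [z])"
      unfolding is_path_def
    proof (intro conjI allI impI)
      show "xs @ [z] \<noteq> []" by simp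
      show "set (xs @ [z]) \<subseteq> verts S" using p zv by (auto simp: is_path_def)
      fix i assume i: "Suc i < length (xs @ [z])"
      show "((xs @ [z]) ! i, (xs @ [z]) ! Suc i) \<in> arcs S"
      proof (cases "Suc i < length xs")
        case True then show ?thesis using p by (simp add: nth_append is_path_def)
      next
        case False
        then have ii: "i = length xs - 1" "Suc i = length xs" using i ne by auto
        have "(xs @ [z]) ! i = y" using ii p(3) ne by (simp add: nth_append last_conv_nth)
        moreover have "(xs @ [z]) ! Suc i = z" using ii by simp
        ultimately show ?thesis using step(2) by simp
      qed
    qed
    then show ?case unfolding reachable_def using p ne by (intro exI[of _ "xs @ [z]"]) simp
  qed
qed

lemma path_mono: "is_path T xs \<Longrightarrow> verts T \<subseteq> verts S \<Longrightarrow> arcs T \<subseteq> arcs S \<Longrightarrow> is_path S xs"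
  unfolding is_path_def by blast

lemma reach_mono: "reachable T x y \<Longrightarrow> verts T \<subseteq> verts S \<Longrightarrow> arcs T \<subseteq> arcs S \<Longrightarrow> reachable S x y"
  unfolding reachable_def using path_mono by blast

lemma pw_mono:
  assumes "is_path S xs" "\<forall>e\<in>arcs S. w e \<ge> 0" "i \<le> i'" "j < length xs"
  shows "path_weight w xs i' j \<le> path_weight w xs i j"
proof -
  have "sum (\<lambda>m. w (xs ! m, xs ! Suc m)) {i'..<j} \<le> sum (\<lambda>m. w (xs ! m, xs ! Suc m)) {i..<j}"
  proof (rule sum_mono2)
    show "finite {i..<j}" by simp
    show "{i'..<j} \<subseteq> {i..<j}" using assms(3) by auto
    fix m assume "m \<in> {i..<j} - {i'..<j}"
    then have "Suc m < length xs" using assms(4) by auto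
    then have "(xs ! m, xs ! Suc m) \<in> arcs S" using assms(1) by (simp add: is_path_def)
    then show "0 \<le> w (xs ! m, xs ! Suc m)" using assms(2) by blast
  qed
  then show ?thesis by (simp add: path_weight_def)
qed

lemma ldp_mono:
  assumes "is_path T xs" "hd xs = s" "t' \<in> \<tau>" "t' \<noteq> t" "reachable T s t'"
    and "verts T \<subseteq> verts S" "arcs T \<subseteq> arcs S"
  shows "ldp_index T \<tau> t xs \<le> ldp_index S \<tau> t xs \<and> ldp_index S \<tau> t xs < length xs"
proof -
  have ne: "xs \<noteq> []" using assms(1) by (simp add: is_path_def)
  define PT where "PT = (\<lambda>i. i < length xs \<and> (\<exists>t'\<in>\<tau> - {t}. reachable T (xs ! i) t'))"
  define PS where "PS = (\<lambda>i. i < length xs \<and> (\<exists>t'\<in>\<tau> - {t}. reachable S (xs ! i) t'))"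
  have "xs ! 0 = s" using assms(2) ne by (simp add: hd_conv_nth)
  then have p0: "PT 0" unfolding PT_def using assms(3,4,5) ne by blast
  have bT: "\<And>y. PT y \<Longrightarrow> y \<le> length xs" by (auto simp: PT_def)
  have bS: "\<And>y. PS y \<Longrightarrow> y \<le> length xs" by (auto simp: PS_def)
  have "PT (Greatest PT)" by (rule GreatestI_nat[of PT 0 "length xs", OF p0 bT])
  hence g: "PS (Greatest PT)" unfolding PT_def PS_def using reach_mono[OF _ assms(6,7)] by blast
  then have "Greatest PT \<le> Greatest PS" by (rule Greatest_le_nat[of PS _ "length xs", OF _ bS])
  moreover have "PS (Greatest PS)" by (rule GreatestI_nat[of PS _ "length xs", OF g bS])
  moreover have "ldp_index T \<tau> t xs = Greatest PT" by (simp add: ldp_index_def PT_def)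
  moreover have "ldp_index S \<tau> t xs = Greatest PS" by (simp add: ldp_index_def PS_def)
  ultimately show ?thesis unfolding PS_def by simp
qed

lemma ud_mono:
  assumes "verts T \<subseteq> verts S" "arcs T \<subseteq> arcs S" "\<forall>e\<in>arcs S. w e \<ge> 0"
    and "reachable T s t" "t' \<in> \<tau>" "t' \<noteq> t" "reachable T s t'"
  shows "unique_dist w \<tau> s S t \<le> unique_dist w \<tau> s T t"
proof -
  define XS where "XS = {path_weight w xs (ldp_index S \<tau> t xs) (length xs - 1) | xs. is_path S xs \<and> hd xs = s \<and> last xs = t}"
  define XT where "XT = {path_weight w xs (ldp_index T \<tau> t xs) (length xs - 1) | xs. is_path T xs \<and> hd xs = s \<and> last xs = t}"
  have bdd: "bdd_below XS"
  proof (rule bdd_belowI[of _ 0])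
    fix x assume "x \<in> XS"
    then obtain xs where x: "x = path_weight w xs (ldp_index S \<tau> t xs) (length xs - 1)" and p: "is_path S xs" by (auto simp: XS_def)
    have "0 \<le> w (xs ! m, xs ! Suc m)" if "m \<in> {ldp_index S \<tau> t xs..<length xs - 1}" for m
    proof -
      have "Suc m < length xs" using that by auto
      then have "(xs ! m, xs ! Suc m) \<in> arcs S" using p by (simp add: is_path_def)
      then show ?thesis using assms(3) by blast
    qed
    then show "0 \<le> x" unfolding x path_weight_def by (rule sum_nonneg)
  qed
  have ne: "XT \<noteq> {}" using assms(4) unfolding XT_def reachable_def by blast
  have "Inf XS \<le> Inf XT"
  proof (rule cInf_greatest[OF ne])
    fix x assume "x \<in> XT"
    then obtain xs where x: "x = path_weight w xs (ldp_index T \<tau> t xs) (length xs - 1)"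
      and p: "is_path T xs" "hd xs = s" "last xs = t" by (auto simp: XT_def)
    have pS: "is_path S xs" using path_mono[OF p(1) assms(1,2)] .
    note l = ldp_mono[OF p(1,2) assms(5,6,7,1,2)]
    have ne': "xs \<noteq> []" using p by (simp add: is_path_def)
    have "path_weight w xs (ldp_index S \<tau> t xs) (length xs - 1) \<le> x"
      unfolding x using l ne' by (intro pw_mono[OF pS assms(3)]) auto
    moreover have "path_weight w xs (ldp_index S \<tau> t xs) (length xs - 1) \<in> XS" using pS p unfolding XS_def by blast
    ultimately show "Inf XS \<le> x" using cInf_lower[OF _ bdd] order_trans by blast
  qed
  moreover have "unique_dist w \<tau> s S t = Inf XS" by (simp only: unique_dist_def XS_def)
  moreover have "unique_dist w \<tau> s T t = Inf XT" by (simp only: unique_dist_def XT_def)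
  ultimately show ?thesis by simp
qed

lemma CD_mono:
  assumes "verts T \<subseteq> verts S" "arcs T \<subseteq> arcs S" "\<forall>e\<in>arcs S. w e \<ge> 0"
    and "\<forall>t\<in>\<tau>. reachable T s t" "finite \<tau>" "card \<tau> \<ge> 2"
  shows "CD w \<tau> s S \<le> CD w \<tau> s T"
proof -
  have tne: "\<tau> \<noteq> {}" using assms(6) by auto
  have "Min (unique_dist w \<tau> s T ` \<tau>) \<in> unique_dist w \<tau> s T ` \<tau>"
    by (rule Min_in) (use assms(5) tne in auto)
  then obtain t0 where t0: "t0 \<in> \<tau>" "CD w \<tau> s T = unique_dist w \<tau> s T t0"
    unfolding CD_def by auto
  have "\<exists>t'\<in>\<tau>. t' \<noteq> t0"
  proof (rule ccontr)
    assume "\<not> (\<exists>t'\<in>\<tau>. t' \<noteq> t0)"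
    then have "\<tau> \<subseteq> {t0}" by blast
    then have "card \<tau> \<le> card {t0}" by (rule card_mono[rotated]) simp
    then show False using assms(6) by simp
  qed
  then obtain t' where t': "t' \<in> \<tau>" "t' \<noteq> t0" by blast
  have "CD w \<tau> s S \<le> unique_dist w \<tau> s S t0" unfolding CD_def
    by (rule Min_le) (use assms(5) t0(1) in simp_all)
  also have "\<dots> \<le> unique_dist w \<tau> s T t0"
    by (rule ud_mono[OF assms(1,2,3) _ t']) (use assms(4) t0(1) t'(1) in simp_all)
  finally show ?thesis using t0(2) by simp
qed

lemma rt_remove_arc:
  assumes "(s,y) \<in> A\<^sup>*" "(s,v) \<in> (A - {(u,v)})\<^sup>*"
  shows "(s,y) \<in> (A - {(u,v)})\<^sup>*"
  using assms(1)
proof (induction rule: rtrancl_induct)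
  case base show ?case by simp
next
  case (step y z)
  show ?case
  proof (cases "(y,z) = (u,v)")
    case True then show ?thesis using assms(2) by simp
  next
    case False then show ?thesis using step by (meson DiffI rtrancl.rtrancl_into_rtrancl singletonD)
  qed
qed

lemma rt_pred:
  assumes "(s,v) \<in> A\<^sup>*" "s \<noteq> v"
  shows "\<exists>u. (s,u) \<in> {a\<in>A. snd a \<noteq> v}\<^sup>* \<and> (u,v) \<in> A"
proof -
  let ?B = "{a\<in>A. snd a \<noteq> v}"
  have "(s,y) \<in> ?B\<^sup>* \<or> (\<exists>u. (s,u) \<in> ?B\<^sup>* \<and> (u,v) \<in> A)" if "(s,y) \<in> A\<^sup>*" for y
    using that
  proof (induction rule: rtrancl_induct)
    case base then show ?case by simp
  next
    case (step y z)
    show ?case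
    proof (cases "(s,y) \<in> ?B\<^sup>*")
      case h: True
      show ?thesis
      proof (cases "z = v")
        case True then show ?thesis using h step(2) by blast
      next
        case False
        then have "(y,z) \<in> ?B" using step(2) by simp
        then show ?thesis using h by (blast intro: rtrancl.rtrancl_into_rtrancl)
      qed
    next
      case False then show ?thesis using step(3) by blast
    qed
  qed
  from this[OF assms(1)] show ?thesis
  proof
    assume "(s,v) \<in> ?B\<^sup>*"
    then show ?thesis using assms(2) by (cases rule: rtranclE) auto
  qed simp
qed

lemma rt_remove_unreach:
  assumes "(s,y) \<in> A\<^sup>*" "(s,v) \<notin> A\<^sup>*"
  shows "(s,y) \<in> {a\<in>A. fst a \<noteq> v \<and> snd a \<noteq> v}\<^sup>*"
  using assms(1)
proof (induction rule: rtrancl_induct)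
  case base then show ?case by simp
next
  case (step y z)
  have "y \<noteq> v" using step(1) assms(2) by auto
  moreover have "z \<noteq> v" using step(1,2) assms(2) by (metis rtrancl.rtrancl_into_rtrancl)
  ultimately have "(y,z) \<in> {a\<in>A. fst a \<noteq> v \<and> snd a \<noteq> v}" using step(2) by simp
  then show ?case using step(3) by (blast intro: rtrancl.rtrancl_into_rtrancl)
qed

lemma rt_remove_sink:
  assumes "(s,y) \<in> A\<^sup>*" "s \<noteq> v" "y \<noteq> v" "\<forall>x. (v,x) \<notin> A"
  shows "(s,y) \<in> {a\<in>A. fst a \<noteq> v \<and> snd a \<noteq> v}\<^sup>*"
proof -
  have "y = v \<or> (s,y) \<in> {a\<in>A. fst a \<noteq> v \<and> snd a \<noteq> v}\<^sup>*" if "(s,y) \<in> A\<^sup>*" for y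
    using that
  proof (induction rule: rtrancl_induct)
    case base then show ?case by simp
  next
    case (step y z)
    have yv: "y \<noteq> v" using step(2) assms(4) by auto
    then have h: "(s,y) \<in> {a\<in>A. fst a \<noteq> v \<and> snd a \<noteq> v}\<^sup>*" using step(3) by auto
    show ?case
    proof (cases "z = v")
      case False
      then have "(y,z) \<in> {a\<in>A. fst a \<noteq> v \<and> snd a \<noteq> v}" using step(2) yv by simp
      then show ?thesis using h by (blast intro: rtrancl.rtrancl_into_rtrancl)
    qed simp
  qed
  then show ?thesis using assms(1,3) by blast
qed

lemma steiner_reach:
  assumes "S \<in> steiner_trees V E \<tau> s" "finite V" and v: "v \<in> verts S"
  shows "(s,v) \<in> (arcs S)\<^sup>*"
proof -
  have sub: "is_subgraph V E S" and oa: "out_arborescence S s" using assms(1) by (auto simp: steiner_trees_def)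
  have finW: "finite (verts S)" using sub assms(2) by (auto simp: is_subgraph_def intro: finite_subset)
  have AW: "arcs S \<subseteq> verts S \<times> verts S" using sub by (simp add: is_subgraph_def)
  have finA: "finite (arcs S)" using AW finW by (meson finite_SigmaI finite_subset)
  have con: "und_connected S" and in0: "card {u. (u, s) \<in> arcs S} = 0"
    and in1: "\<forall>v\<in>verts S - {s}. card {u. (u, v) \<in> arcs S} = 1"
    using oa by (auto simp: out_arborescence_def und_tree_def)
  have finIn: "finite {u. (u,x) \<in> arcs S}" for x
  proof (rule finite_subset[of _ "fst ` arcs S"])
    show "{u. (u,x) \<in> arcs S} \<subseteq> fst ` arcs S" by force
    show "finite (fst ` arcs S)" using finA by simp
  qed
  have noS: "(u,s) \<notin> arcs S" for u using in0 finIn[of s] by auto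
  have stp: "(s,z) \<in> (arcs S)\<^sup>*" if y: "(s,y) \<in> (arcs S)\<^sup>*" and yz: "(y,z) \<in> arcs S \<union> (arcs S)\<inverse>" for y z
  proof (cases "(y,z) \<in> arcs S")
    case True then show ?thesis using y by (rule rtrancl.rtrancl_into_rtrancl[rotated])
  next
    case False
    hence zy: "(z,y) \<in> arcs S" using yz by simp
    hence ys: "y \<noteq> s" using noS by auto
    moreover have "y \<in> verts S" using zy AW by auto
    ultimately have c1: "card {u. (u, y) \<in> arcs S} = 1" using in1 by auto
    from y ys obtain p where p: "(s,p) \<in> (arcs S)\<^sup>*" "(p,y) \<in> arcs S"
      by (metis rtranclE)
    have "p = z" using c1 p(2) zy by (metis (mono_tags) card_1_singletonE mem_Collect_eq singletonD)
    then show ?thesis using p(1) by simp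
  qed
  have "(s,v) \<in> (arcs S \<union> (arcs S)\<inverse>)\<^sup>*" using con v oa unfolding und_connected_def out_arborescence_def by blast
  then show ?thesis
  proof (induction rule: rtrancl_induct)
    case base then show ?case by simp
  next
    case (step y z) then show ?case using stp by blast
  qed
qed

lemma exists_tree:
  assumes fin: "finite V" and EV: "E \<subseteq> V \<times> V"
    and F: "feasible V E w \<tau> s b S"
  shows "\<exists>T. T \<in> steiner_trees V E \<tau> s \<and> verts T \<subseteq> verts S \<and> arcs T \<subseteq> arcs S \<and> (\<forall>t\<in>\<tau>. reachable T s t)"
proof -
  define Q where "Q T \<longleftrightarrow> verts T \<subseteq> verts S \<and> arcs T \<subseteq> arcs S \<and> arcs T \<subseteq> verts T \<times> verts T
     \<and> s \<in> verts T \<and> \<tau> \<subseteq> verts T \<and> (\<forall>t\<in>\<tau>. (s,t) \<in> (arcs T)\<^sup>*)" for T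
  define m where "m T = card (verts T) + card (arcs T)" for T :: "'a sgraph"
  have FS: "is_subgraph V E S" "s \<in> verts S" "\<tau> \<subseteq> verts S" "\<forall>t\<in>\<tau>. reachable S s t"
    using F by (auto simp: feasible_def)
  have AS: "arcs S \<subseteq> verts S \<times> verts S" using FS(1) by (simp add: is_subgraph_def)
  have finVS: "finite (verts S)" using FS(1) fin by (auto simp: is_subgraph_def intro: finite_subset)
  have finAS: "finite (arcs S)" using AS finVS by (meson finite_SigmaI finite_subset)
  have "Q S" using FS AS reach_iff[OF AS] unfolding Q_def by blast
  then obtain T where QT: "Q T" and minT: "\<And>T'. Q T' \<Longrightarrow> m T \<le> m T'"
    using ex_has_least_nat[of Q S m] by blast
  have TS: "verts T \<subseteq> verts S" "arcs T \<subseteq> arcs S" and AT: "arcs T \<subseteq> verts T \<times> verts T"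
    and sT: "s \<in> verts T" and tT: "\<tau> \<subseteq> verts T" and rT: "\<forall>t\<in>\<tau>. (s,t) \<in> (arcs T)\<^sup>*"
    using QT unfolding Q_def by auto
  have finW: "finite (verts T)" using TS finVS by (meson finite_subset)
  have finA: "finite (arcs T)" using TS finAS by (meson finite_subset)
  have arc_rm: False if e: "e \<in> arcs T" and r: "\<forall>t\<in>\<tau>. (s,t) \<in> (arcs T - {e})\<^sup>*" for e
  proof -
    let ?T' = "(verts T, arcs T - {e})"
    have "Q ?T'" using TS AT sT tT r unfolding Q_def by auto
    moreover have "m ?T' < m T"
    proof -
      have "card (arcs T - {e}) < card (arcs T)" by (rule card_Diff1_less[OF finA e])
      then show ?thesis unfolding m_def by simp
    qed
    ultimately show False using minT[of ?T'] by simp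
  qed
  have v_rm: False if v: "v \<in> verts T" "v \<noteq> s" "v \<notin> \<tau>"
     and r: "\<forall>t\<in>\<tau>. (s,t) \<in> {a\<in>arcs T. fst a \<noteq> v \<and> snd a \<noteq> v}\<^sup>*" for v
  proof -
    let ?T' = "(verts T - {v}, {a\<in>arcs T. fst a \<noteq> v \<and> snd a \<noteq> v})"
    have "Q ?T'" using TS AT sT tT r v unfolding Q_def by auto
    moreover have "m ?T' < m T"
    proof -
      have "card (verts T - {v}) < card (verts T)" by (rule card_Diff1_less[OF finW v(1)])
      moreover have "card {a\<in>arcs T. fst a \<noteq> v \<and> snd a \<noteq> v} \<le> card (arcs T)" using finA by (intro card_mono) auto
      ultimately show ?thesis unfolding m_def by simp
    qed
    ultimately show False using minT[of ?T'] by simp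
  qed
  have reachAll: "(s,v) \<in> (arcs T)\<^sup>*" if vW: "v \<in> verts T" for v
  proof (rule ccontr)
    assume h: "(s,v) \<notin> (arcs T)\<^sup>*"
    have "v \<noteq> s" using h by auto
    moreover have "v \<notin> \<tau>" using h rT by auto
    moreover have "\<forall>t\<in>\<tau>. (s,t) \<in> {a\<in>arcs T. fst a \<noteq> v \<and> snd a \<noteq> v}\<^sup>*"
      using rt_remove_unreach[OF bspec[OF rT] h] by blast
    ultimately show False using v_rm[OF vW] by blast
  qed
  have noin_s: "(u,s) \<notin> arcs T" for u
  proof
    assume us: "(u,s) \<in> arcs T"
    have "\<forall>t\<in>\<tau>. (s,t) \<in> (arcs T - {(u,s)})\<^sup>*"
    proof
      fix t assume "t \<in> \<tau>"
      show "(s,t) \<in> (arcs T - {(u,s)})\<^sup>*"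
        by (rule rt_remove_arc[OF bspec[OF rT \<open>t \<in> \<tau>\<close>] rtrancl.rtrancl_refl])
    qed
    then show False using arc_rm[OF us] by blast
  qed
  have uniq_in: "a = c" if a1: "(a,v) \<in> arcs T" and a2: "(c,v) \<in> arcs T" for a c v
  proof (rule ccontr)
    assume ac: "a \<noteq> c"
    have vW: "v \<in> verts T" using a1 AT by auto
    have "s \<noteq> v" using noin_s a1 by auto
    then obtain u where u: "(s,u) \<in> {x\<in>arcs T. snd x \<noteq> v}\<^sup>*" "(u,v) \<in> arcs T"
      using rt_pred[OF reachAll[OF vW]] by blast
    obtain d where d: "(d,v) \<in> arcs T" "d \<noteq> u"
    proof (cases "a = u")
      case True then show ?thesis using that[of c] a2 ac by blast
    next
      case False then show ?thesis using that[of a] a1 by blast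
    qed
    have "{x\<in>arcs T. snd x \<noteq> v} \<subseteq> arcs T - {(d,v)}" by auto
    then have "(s,u) \<in> (arcs T - {(d,v)})\<^sup>*" using u(1) rtrancl_mono by blast
    moreover have "(u,v) \<in> arcs T - {(d,v)}" using u(2) d(2) by auto
    ultimately have "(s,v) \<in> (arcs T - {(d,v)})\<^sup>*" by (rule rtrancl.rtrancl_into_rtrancl)
    then have "\<forall>t\<in>\<tau>. (s,t) \<in> (arcs T - {(d,v)})\<^sup>*"
      using rt_remove_arc[OF bspec[OF rT]] by blast
    then show False using arc_rm d(1) by blast
  qed
  have leaf: "v \<in> \<tau>" if v: "v \<in> verts T" "v \<noteq> s" "\<forall>x. (v,x) \<notin> arcs T" for v
  proof (rule ccontr)
    assume vt: "v \<notin> \<tau>"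
    have "(s,t) \<in> {a\<in>arcs T. fst a \<noteq> v \<and> snd a \<noteq> v}\<^sup>*" if t: "t \<in> \<tau>" for t
    proof (rule rt_remove_sink)
      show "(s,t) \<in> (arcs T)\<^sup>*" using rT t by blast
      show "s \<noteq> v" using v(2) by simp
      show "t \<noteq> v" using t vt by blast
      show "\<forall>x. (v,x) \<notin> arcs T" using v(3) .
    qed
    then show False using v_rm[OF v(1,2) vt] by blast
  qed
  have nocyc: "\<not> und_cycle T vs as" for vs as
  proof
    assume c: "und_cycle T vs as"
    let ?n = "length vs"
    have c1: "?n \<ge> 1" "length as = ?n" "distinct vs" "distinct as" "set as \<subseteq> arcs T"
      using c unfolding und_cycle_def by auto
    have c2: "as ! i = (vs ! i, vs ! ((i + 1) mod ?n)) \<or> as ! i = (vs ! ((i + 1) mod ?n), vs ! i)"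
      if "i < ?n" for i
      using c that unfolding und_cycle_def by blast
    have ends: "fst a \<in> set vs \<and> snd a \<in> set vs" if a: "a \<in> set as" for a
    proof -
      obtain i where i: "i < ?n" "a = as ! i" using a c1(2) by (metis in_set_conv_nth)
      have "(i+1) mod ?n < ?n" using c1(1) by (intro mod_less_divisor) linarith
      then have "vs ! ((i+1) mod ?n) \<in> set vs" "vs ! i \<in> set vs" using i(1) by simp_all
      then show ?thesis using c2[OF i(1)] i(2) by auto
    qed
    have inj: "inj_on snd (set as)"
    proof (rule inj_onI)
      fix a a' assume h: "a \<in> set as" "a' \<in> set as" "snd a = snd a'"
      have "(fst a, snd a) \<in> arcs T" using h(1) c1(5) by (metis prod.collapse subsetD)
      moreover have "(fst a', snd a) \<in> arcs T" using h(2,3) c1(5) by (metis prod.collapse subsetD)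
      ultimately have "fst a = fst a'" by (rule uniq_in)
      then show "a = a'" using h(3) by (simp add: prod_eq_iff)
    qed
    have "card (snd ` set as) = card (set vs)"
      using card_image[OF inj] c1(2,3,4) by (simp add: distinct_card)
    moreover have "snd ` set as \<subseteq> set vs" using ends by auto
    ultimately have sur: "snd ` set as = set vs" by (simp add: card_subset_eq)
    have closed: "y \<in> set vs" if x: "x \<in> set vs" and yx: "(y,x) \<in> arcs T" for x y
    proof -
      obtain a where a: "a \<in> set as" "snd a = x" using sur x by force
      have "(fst a, x) \<in> arcs T" using a c1(5) by auto
      then have "fst a = y" using uniq_in yx by blast
      then show ?thesis using ends a(1) by blast
    qed
    have sv: "s \<notin> set vs"
    proof
      assume "s \<in> set vs"
      then obtain a where a: "a \<in> set as" "snd a = s" using sur by force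
      then have "(fst a, s) \<in> arcs T" using c1(5) by auto
      then show False using noin_s by blast
    qed
    have notin: "y \<notin> set vs" if "(s,y) \<in> (arcs T)\<^sup>*" for y
      using that
    proof (induction rule: rtrancl_induct)
      case base show ?case using sv .
    next
      case (step y z) then show ?case using closed by blast
    qed
    have v0: "vs ! 0 \<in> set vs" using c1(1) by (intro nth_mem) linarith
    then obtain a where a: "a \<in> set as" "snd a = vs ! 0" using sur by force
    then have "vs ! 0 \<in> verts T" using c1(5) AT by force
    then show False using notin[OF reachAll] v0 by blast
  qed
  have "T \<in> steiner_trees V E \<tau> s"
    unfolding steiner_trees_def out_arborescence_def und_tree_def
  proof (intro CollectI conjI ballI impI)
    show "is_subgraph V E T" using TS AT FS(1) unfolding is_subgraph_def by blast
    show "verts T \<noteq> {}" using sT by auto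
    show "und_connected T" unfolding und_connected_def
    proof (intro ballI)
      fix u v assume uv: "u \<in> verts T" "v \<in> verts T"
      let ?R = "arcs T \<union> (arcs T)\<inverse>"
      have "arcs T \<subseteq> ?R" by (rule Un_upper1)
      then have sub: "(arcs T)\<^sup>* \<subseteq> ?R\<^sup>*" by (rule rtrancl_mono)
      have su: "(s,u) \<in> ?R\<^sup>*" using sub reachAll[OF uv(1)] by (rule subsetD)
      have sv: "(s,v) \<in> ?R\<^sup>*" using sub reachAll[OF uv(2)] by (rule subsetD)
      have "(u,s) \<in> (?R\<inverse>)\<^sup>*" using su by (rule rtrancl_converseI)
      moreover have "?R\<inverse> = ?R" by (simp add: converse_Un Un_commute)
      ultimately have "(u,s) \<in> ?R\<^sup>*" by simp
      then show "(u,v) \<in> ?R\<^sup>*" using sv by (rule rtrancl_trans)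
    qed
    show "\<nexists>vs as. und_cycle T vs as" using nocyc by blast
    show "s \<in> verts T" by (rule sT)
    have "{u. (u, s) \<in> arcs T} = {}" using noin_s by blast
    then show "card {u. (u, s) \<in> arcs T} = 0" by (simp only: card.empty)
    show "\<tau> \<subseteq> verts T" by (rule tT)
  next
    fix v assume v: "v \<in> verts T - {s}"
    then have vW: "v \<in> verts T" and vs: "v \<noteq> s" by auto
    have "(s,v) \<in> (arcs T)\<^sup>*" by (rule reachAll[OF vW])
    then obtain u where u: "(s,u) \<in> (arcs T)\<^sup>*" "(u,v) \<in> arcs T"
      using vs by (cases rule: rtranclE) auto
    have "{u. (u, v) \<in> arcs T} = {u}"
    proof
      show "{u. (u, v) \<in> arcs T} \<subseteq> {u}" using u(2) uniq_in by blast
      show "{u} \<subseteq> {u. (u, v) \<in> arcs T}" using u(2) by blast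
    qed
    then show "card {u. (u, v) \<in> arcs T} = 1" by simp
  next
    fix v assume "v \<in> verts T - {s}" "\<nexists>x. (v, x) \<in> arcs T"
    then show "v \<in> \<tau>" using leaf by blast
  qed
  moreover have "\<forall>t\<in>\<tau>. reachable T s t"
  proof
    fix t assume "t \<in> \<tau>"
    then have "(s,t) \<in> (arcs T)\<^sup>*" using rT by blast
    then show "reachable T s t" using reach_iff[OF AT, of s t] sT by simp
  qed
  ultimately have "T \<in> steiner_trees V E \<tau> s \<and> verts T \<subseteq> verts S \<and> arcs T \<subseteq> arcs S \<and> (\<forall>t\<in>\<tau>. reachable T s t)"
    using TS by simp
  then show ?thesis by (rule exI)
qed

theorem theorem1:
  fixes V :: "'v set" and E :: "('v \<times> 'v) set" and w :: "'v \<times> 'v \<Rightarrow> real"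
    and s :: 'v and \<tau> :: "'v set" and b :: real
  assumes "finite V" and "E \<subseteq> V \<times> V" and "\<forall>e\<in>E. w e \<ge> 0"
    and "s \<in> V" and "\<tau> \<subseteq> V - {s}" and "card \<tau> \<ge> 2" and "b \<ge> 0"
    and "\<exists>S. feasible V E w \<tau> s b S"
  shows "Max {CD w \<tau> s S | S. feasible V E w \<tau> s b S}
           = Max {CD w \<tau> s S | S. S \<in> steiner_trees V E \<tau> s \<and> cost w S \<le> b}
         \<and> (\<exists>Sopt. Sopt \<in> steiner_trees V E \<tau> s \<and> cost w Sopt \<le> b \<and>
              CD w \<tau> s Sopt = Max {CD w \<tau> s S | S. feasible V E w \<tau> s b S})"
proof -
  have finE: "finite E" using assms(1,2) by (meson finite_SigmaI finite_subset)
  have finTau: "finite \<tau>" using assms(6) by (metis card.infinite not_numeral_le_zero)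
  define F where "F = {CD w \<tau> s S | S. feasible V E w \<tau> s b S}"
  define St where "St = {CD w \<tau> s S | S. S \<in> steiner_trees V E \<tau> s \<and> cost w S \<le> b}"
  have univ: "S \<in> Pow V \<times> Pow E" if "is_subgraph V E S" for S
    using that by (cases S) (auto simp: is_subgraph_def)
  have finU: "finite (CD w \<tau> s ` (Pow V \<times> Pow E))" using assms(1) finE by simp
  have finF: "finite F"
  proof (rule finite_subset[OF _ finU])
    show "F \<subseteq> CD w \<tau> s ` (Pow V \<times> Pow E)" unfolding F_def feasible_def using univ by blast
  qed
  have finSt: "finite St"
  proof (rule finite_subset[OF _ finU])
    show "St \<subseteq> CD w \<tau> s ` (Pow V \<times> Pow E)" unfolding St_def steiner_trees_def using univ by blast
  qed
  have key: "\<exists>T. T \<in> steiner_trees V E \<tau> s \<and> cost w T \<le> b \<and> CD w \<tau> s S \<le> CD w \<tau> s T"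
    if fS: "feasible V E w \<tau> s b S" for S
  proof -
    obtain T where T: "T \<in> steiner_trees V E \<tau> s" "verts T \<subseteq> verts S" "arcs T \<subseteq> arcs S" "\<forall>t\<in>\<tau>. reachable T s t"
      using exists_tree[OF assms(1,2) fS] by blast
    have sub: "is_subgraph V E S" and cS: "cost w S \<le> b" using fS by (auto simp: feasible_def)
    have wn: "\<forall>e\<in>arcs S. 0 \<le> w e" using sub assms(3) by (auto simp: is_subgraph_def)
    have finAS: "finite (arcs S)" using sub finE by (auto simp: is_subgraph_def intro: finite_subset)
    have "cost w T \<le> cost w S" unfolding cost_def using T(3) wn finAS by (intro sum_mono2) auto
    moreover have "CD w \<tau> s S \<le> CD w \<tau> s T" using CD_mono[OF T(2,3) wn T(4) finTau assms(6)] .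
    ultimately have "cost w T \<le> b \<and> CD w \<tau> s S \<le> CD w \<tau> s T" using cS by auto
    then show ?thesis using T(1) by blast
  qed
  have st_feas: "feasible V E w \<tau> s b T" if T: "T \<in> steiner_trees V E \<tau> s" and cT: "cost w T \<le> b" for T
  proof -
    have sub: "is_subgraph V E T" and sv: "s \<in> verts T" and tv: "\<tau> \<subseteq> verts T"
      using T by (auto simp: steiner_trees_def out_arborescence_def)
    have AT: "arcs T \<subseteq> verts T \<times> verts T" using sub by (simp add: is_subgraph_def)
    have "reachable T s t" if t: "t \<in> \<tau>" for t
      using reach_iff[OF AT] sv steiner_reach[OF T assms(1)] t tv by blast
    then show ?thesis using sub sv tv cT by (auto simp: feasible_def)
  qed
  have StF: "St \<subseteq> F" unfolding St_def F_def using st_feas by blast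
  obtain S0 where S0: "feasible V E w \<tau> s b S0" using assms(8) by blast
  have Fne: "F \<noteq> {}" using S0 unfolding F_def by blast
  have "Max F \<in> F" using finF Fne by (rule Max_in)
  then obtain S1 where S1': "feasible V E w \<tau> s b S1" "Max F = CD w \<tau> s S1" unfolding F_def by blast
  then have S1: "feasible V E w \<tau> s b S1" "CD w \<tau> s S1 = Max F" by simp_all
  obtain T1 where T1: "T1 \<in> steiner_trees V E \<tau> s" "cost w T1 \<le> b" "CD w \<tau> s S1 \<le> CD w \<tau> s T1"
    using key[OF S1(1)] by blast
  have inSt: "CD w \<tau> s T1 \<in> St" unfolding St_def using T1 by blast
  then have "CD w \<tau> s T1 \<le> Max F" using StF finF by (intro Max_ge) auto
  then have eq: "CD w \<tau> s T1 = Max F" using S1(2) T1(3) by simp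
  have "Max St \<le> Max F" using StF inSt finF by (intro Max_mono) auto
  moreover have "Max F \<le> Max St" using eq Max_ge[OF finSt inSt] by simp
  ultimately have "Max F = Max St" by simp
  then have res: "Max F = Max St \<and> (\<exists>Sopt. Sopt \<in> steiner_trees V E \<tau> s \<and> cost w Sopt \<le> b \<and> CD w \<tau> s Sopt = Max F)"
    using T1(1,2) eq by blast
  then show ?thesis unfolding F_def St_def .
qed

end
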